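(* Let $n,k$ be integers with $2<2k\le n$ such that $\mathrm{Pet}(n,k)$ is not bipartite (equivalently, it is not the case that $n$ is even and $k$ is odd). Write $d=\gcd(n,k)$ and define the index set $$\mathrm{Ind}(n,k)=\begin{cases}\{t \mid t \text{ odd},\ 0\le t\le \min\{\tfrac{2k}{d},\ \lfloor\tfrac{(k-1)^2}{n}\rfloor+1\}\} & \text{if } k \text{ and } n \text{ are odd},\\ \{t\in\mathbb{Z} \mid 0<t\le \min\{\tfrac{2k}{d},\ \lfloor\tfrac{(k-1)^2}{n}\rfloor\}\} & \text{if } \tfrac{n}{d} \text{ is odd and } k \text{ is even},\\ \{t\in\mathbb{Z} \mid 0<t\le \min\{\tfrac{k}{d},\ \lfloor\tfrac{(k-1)^2}{n}\rfloor\}\} & \text{if } \tfrac{n}{d} \text{ and } k \text{ are even},\end{cases}$$ and $$\mathcal{G}=\bigcup_{t\in \mathrm{Ind}(n,k)}\Big\{\,tn+(1-k)\lfloor \tfrac{tn}{k}\rfloor+2,\ \ (1+k)\lceil \tfrac{tn}{k}\rceil-tn+2\,\Big\}.$$ Then, with $\mathbb{O}$ the set of odd integers, $$g_{odd}(\mathrm{Pet}(n,k))=\min\Big(\big(\{\tfrac{n}{d},\ k+3\}\cup\mathcal{G}\big)\cap\mathbb{O}\Big).$$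
   Context: For integers $n,k$ with $2<2k\le n$, the generalized Petersen graph $\mathrm{Pet}(n,k)$ has vertex set $\{u_0,\dots,u_{n-1}\}\cup\{v_0,\dots,v_{n-1}\}$ and edge set $\{u_iu_{i+1}\}\cup\{u_iv_i\}\cup\{v_iv_{i+k}\}$, $i\in\{0,\dots,n-1\}$, with indices taken modulo $n$. For a non-bipartite graph $G$, the odd girth $g_{odd}(G)$ is the length of a shortest odd cycle of $G$. *)

theory Defs
  imports Complex_Main
begin

text \<open>Generalized Petersen graph Pet(n,k). Vertex (False, i) is u_i, vertex (True, i) is v_i,
  for 0 \<le> i < n.\<close>

definition pet_vertices :: "nat \<Rightarrow> (bool \<times> nat) set" where
  "pet_vertices n = UNIV \<times> {0..<n}"

definition pet_edge :: "nat \<Rightarrow> nat \<Rightarrow> (bool \<times> nat) \<Rightarrow> (bool \<times> nat) \<Rightarrow> bool" where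
  "pet_edge n k x y \<longleftrightarrow> x \<in> pet_vertices n \<and> y \<in> pet_vertices n \<and>
     (\<exists>i<n.
        ({x, y} = {(False, i), (False, (i + 1) mod n)}) \<or>
        ({x, y} = {(False, i), (True, i)}) \<or>
        ({x, y} = {(True, i), (True, (i + k) mod n)}))"

definition pet_cycle :: "nat \<Rightarrow> nat \<Rightarrow> (bool \<times> nat) list \<Rightarrow> bool" where
  "pet_cycle n k vs \<longleftrightarrow> length vs \<ge> 3 \<and> distinct vs \<and> set vs \<subseteq> pet_vertices n \<and>
     (\<forall>j < length vs - 1. pet_edge n k (vs ! j) (vs ! (j + 1))) \<and>
     pet_edge n k (last vs) (hd vs)"

definition pet_odd_girth :: "nat \<Rightarrow> nat \<Rightarrow> nat" where
  "pet_odd_girth n k = (LEAST l. odd l \<and> (\<exists>vs. pet_cycle n k vs \<and> length vs = l))"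

definition Ind :: "nat \<Rightarrow> nat \<Rightarrow> int set" where
  "Ind n k = (let d = gcd n k; b = ((int k - 1)^2) div int n in
     if odd k \<and> odd n then
       {t. odd t \<and> 0 \<le> t \<and> t \<le> min (int (2*k div d)) (b + 1)}
     else if odd (n div d) \<and> even k then
       {t. 0 < t \<and> t \<le> min (int (2*k div d)) b}
     else if even (n div d) \<and> even k then
       {t. 0 < t \<and> t \<le> min (int (k div d)) b}
     else {})"

definition G_set :: "nat \<Rightarrow> nat \<Rightarrow> int set" where
  "G_set n k = (\<Union>t\<in>Ind n k.
     {t * int n + (1 - int k) * \<lfloor>real_of_int (t * int n) / real k\<rfloor> + 2,
      (1 + int k) * \<lceil>real_of_int (t * int n) / real k\<rceil> - t * int n + 2})"

end

theory Submission
  imports Defs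
begin

lemma pet_edge_sym: "pet_edge n k x y \<Longrightarrow> pet_edge n k y x"
  unfolding pet_edge_def by (auto simp: insert_commute)

lemma pet_edge_vert: "pet_edge n k x y \<Longrightarrow> x \<in> pet_vertices n \<and> y \<in> pet_vertices n"
  unfolding pet_edge_def by auto

lemma pet_no_loop:
  assumes "2 \<le> n" "0 < k" "k < n"
  shows "\<not> pet_edge n k x x"
proof
  assume "pet_edge n k x x"
  then obtain i where i: "i < n" and
    c: "{x} = {(False, i), (False, (i + 1) mod n)} \<or> {x} = {(False, i), (True, i)} \<or>
        {x} = {(True, i), (True, (i + k) mod n)}"
    unfolding pet_edge_def by auto
  have "(i + 1) mod n \<noteq> i"
  proof (cases "i + 1 < n")
    case True then show ?thesis by simp
  next
    case False then have "i + 1 = n" using i by simp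
    then show ?thesis using assms by simp
  qed
  moreover have "(i + k) mod n \<noteq> i"
  proof (cases "i + k < n")
    case True then show ?thesis using assms by simp
  next
    case False
    then have "(i + k) mod n = i + k - n" using i assms
      by (simp add: mod_if)
    then show ?thesis using assms i False by simp
  qed
  ultimately show False using c by (auto simp: doubleton_eq_iff)
qed

definition cwalk :: "nat \<Rightarrow> nat \<Rightarrow> (nat \<Rightarrow> bool \<times> nat) \<Rightarrow> nat \<Rightarrow> bool" where
  "cwalk n k w l \<longleftrightarrow> 0 < l \<and> w l = w 0 \<and> (\<forall>j<l. pet_edge n k (w j) (w (Suc j)))"

lemma walk_to_cycle:
  assumes "cwalk n k w l" "odd l" "\<And>x. \<not> pet_edge n k x x"
  shows "\<exists>vs. pet_cycle n k vs \<and> odd (length vs) \<and> length vs \<le> l"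
  using assms(1,2)
proof (induction l arbitrary: w rule: less_induct)
  case (less l)
  note cw = less.prems(1)[unfolded cwalk_def]
  show ?case
  proof (cases "inj_on w {..<l}")
    case True
    define vs where "vs = map w [0..<l]"
    have len: "length vs = l" by (simp add: vs_def)
    have "l \<noteq> 1"
    proof
      assume "l = 1"
      then have "pet_edge n k (w 0) (w 1)" using cw by auto
      then show False using cw \<open>l = 1\<close> assms(3) by metis
    qed
    then have l3: "3 \<le> l" using less.prems(2) cw
      by (metis One_nat_def Suc_leI dvd_refl even_Suc_div_two le_neq_implies_less not_less_eq_eq numeral_3_eq_3 odd_pos one_add_one plus_1_eq_Suc nat_less_le not_less_eq)
    have dist: "distinct vs" unfolding vs_def using True
      by (simp add: distinct_map atLeast_upt)
    have sv: "set vs \<subseteq> pet_vertices n"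
    proof
      fix x assume "x \<in> set vs"
      then obtain j where "j < l" "x = w j" by (auto simp: vs_def)
      then show "x \<in> pet_vertices n" using cw pet_edge_vert by blast
    qed
    have ed: "\<forall>j < length vs - 1. pet_edge n k (vs ! j) (vs ! (j + 1))"
      using cw by (auto simp: vs_def nth_map)
    have "last vs = w (l - 1)" using l3 by (simp add: vs_def last_map)
    moreover have "hd vs = w 0" using l3 by (simp add: vs_def hd_map)
    moreover have "l - 1 < l" using l3 by simp
    then have "pet_edge n k (w (l - 1)) (w (Suc (l - 1)))" using cw by blast
    moreover have "Suc (l - 1) = l" using l3 by simp
    ultimately have "pet_edge n k (last vs) (hd vs)" using cw l3 by simp
    then have "pet_cycle n k vs" unfolding pet_cycle_def using l3 len dist sv ed by simp
    then show ?thesis using len less.prems(2) by auto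
  next
    case False
    then obtain i j where ij: "i < j" "j < l" "w i = w j"
      unfolding inj_on_def by (metis lessThan_iff nat_neq_iff)
    define w1 where "w1 = (\<lambda>m. w (i + m))"
    define w2 where "w2 = (\<lambda>m. if m < i then w m else w (m + (j - i)))"
    have c1: "cwalk n k w1 (j - i)"
      unfolding cwalk_def w1_def using ij cw by auto
    have c2: "cwalk n k w2 (l - (j - i))"
      unfolding cwalk_def
    proof (intro conjI allI impI)
      show "0 < l - (j - i)" using ij by simp
      show "w2 (l - (j - i)) = w2 0" using ij cw by (auto simp: w2_def)
      fix m assume m: "m < l - (j - i)"
      show "pet_edge n k (w2 m) (w2 (Suc m))"
      proof (cases "Suc m < i")
        case True then show ?thesis using cw ij by (auto simp: w2_def)
      next
        case False
        show ?thesis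
        proof (cases "Suc m = i")
          case True
          then have "w2 (Suc m) = w (Suc m)" using ij by (simp add: w2_def)
          moreover have "w2 m = w m" using True by (simp add: w2_def)
          moreover have "m < l" using True ij by simp
          ultimately show ?thesis using cw ij True by (metis)
        next
          case False
          then have "w2 m = w (m + (j - i))" "w2 (Suc m) = w (Suc (m + (j - i)))"
            using \<open>\<not> Suc m < i\<close> by (auto simp: w2_def)
          then show ?thesis using cw m ij by auto
        qed
      qed
    qed
    have lt1: "j - i < l" and lt2: "l - (j - i) < l" using ij by auto
    show ?thesis
    proof (cases "odd (j - i)")
      case True
      obtain vs where vs: "pet_cycle n k vs" "odd (length vs)" "length vs \<le> j - i"
        using less.IH[OF lt1 c1 True] by blast
      show ?thesis using vs lt1 by (intro exI[of _ vs]) simp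
    next
      case False
      then have o2: "odd (l - (j - i))" using less.prems(2) ij by auto
      obtain vs where vs: "pet_cycle n k vs" "odd (length vs)" "length vs \<le> l - (j - i)"
        using less.IH[OF lt2 c2 o2] by blast
      show ?thesis using vs lt2 by (intro exI[of _ vs]) simp
    qed
  qed
qed


definition pos :: "nat \<Rightarrow> int \<Rightarrow> nat" where "pos n x = nat (x mod int n)"
definition uu :: "nat \<Rightarrow> int \<Rightarrow> bool \<times> nat" where "uu n x = (False, pos n x)"
definition vv :: "nat \<Rightarrow> int \<Rightarrow> bool \<times> nat" where "vv n x = (True, pos n x)"

definition lat :: "nat \<Rightarrow> nat \<Rightarrow> int \<Rightarrow> int \<Rightarrow> bool" where
  "lat n k A B \<longleftrightarrow> int n dvd A + int k * B \<and> odd (A + B)"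

definition cost :: "int \<Rightarrow> int \<Rightarrow> int" where
  "cost A B = (if B = 0 then \<bar>A\<bar> else if A = 0 then \<bar>B\<bar> else \<bar>A\<bar> + \<bar>B\<bar> + 2)"

lemma pos_lt: "0 < n \<Longrightarrow> pos n x < n"
  unfolding pos_def by (simp add: nat_less_iff)

lemma int_pos: "0 < n \<Longrightarrow> int (pos n x) = x mod int n"
  unfolding pos_def by simp

lemma pos_add: "0 < n \<Longrightarrow> (pos n x + c) mod n = pos n (x + int c)"
proof -
  assume n: "0 < n"
  have "int ((pos n x + c) mod n) = (int (pos n x) + int c) mod int n"
    by (simp add: zmod_int)
  also have "\<dots> = (x mod int n + int c) mod int n" using n by (simp add: int_pos)
  also have "\<dots> = (x + int c) mod int n" by (simp add: mod_add_left_eq)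
  also have "\<dots> = int (pos n (x + int c))" using n by (simp add: int_pos)
  finally show ?thesis by simp
qed

lemma pos_cong: "x mod int n = y mod int n \<Longrightarrow> pos n x = pos n y"
  unfolding pos_def by simp

lemma vert_uu: "0 < n \<Longrightarrow> uu n x \<in> pet_vertices n"
  by (simp add: uu_def pet_vertices_def pos_lt)
lemma vert_vv: "0 < n \<Longrightarrow> vv n x \<in> pet_vertices n"
  by (simp add: vv_def pet_vertices_def pos_lt)

lemma E1: assumes "0 < n" shows "pet_edge n k (uu n x) (uu n (x + 1))"
proof -
  have "(pos n x + 1) mod n = pos n (x + 1)" using pos_add[OF assms, of x 1] by simp
  then show ?thesis unfolding pet_edge_def
    apply (intro conjI vert_uu vert_vv assms)
    apply (rule exI[of _ "pos n x"])
    apply (simp add: uu_def pos_lt assms)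
    done
qed

lemma E3: assumes "0 < n" shows "pet_edge n k (vv n x) (vv n (x + int k))"
proof -
  have "(pos n x + k) mod n = pos n (x + int k)" using pos_add[OF assms, of x k] by simp
  then show ?thesis unfolding pet_edge_def
    apply (intro conjI vert_uu vert_vv assms)
    apply (rule exI[of _ "pos n x"])
    apply (simp add: vv_def pos_lt assms)
    done
qed

lemma E2: assumes "0 < n" shows "pet_edge n k (uu n x) (vv n x)"
  unfolding pet_edge_def
    apply (intro conjI vert_uu vert_vv assms)
    apply (rule exI[of _ "pos n x"])
    apply (simp add: uu_def vv_def pos_lt assms)
    done

lemma E1s: assumes "0 < n" "s = 1 \<or> s = -1" shows "pet_edge n k (uu n x) (uu n (x + s))"
  using assms(2)
proof
  assume "s = 1" then show ?thesis using E1[OF assms(1)] by simp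
next
  assume "s = -1"
  have "pet_edge n k (uu n (x - 1)) (uu n (x - 1 + 1))" by (rule E1[OF assms(1)])
  then have "pet_edge n k (uu n (x - 1 + 1)) (uu n (x - 1))" by (rule pet_edge_sym)
  then show ?thesis using \<open>s = -1\<close> by simp
qed

lemma E3s: assumes "0 < n" "s = 1 \<or> s = -1" shows "pet_edge n k (vv n x) (vv n (x + s * int k))"
  using assms(2)
proof
  assume "s = 1" then show ?thesis using E3[OF assms(1)] by simp
next
  assume "s = -1"
  have "pet_edge n k (vv n (x - int k)) (vv n (x - int k + int k))" by (rule E3[OF assms(1)])
  then have "pet_edge n k (vv n (x - int k + int k)) (vv n (x - int k))" by (rule pet_edge_sym)
  then show ?thesis using \<open>s = -1\<close> by simp
qed

lemma single_layer:
  assumes n: "0 < n" and e: "\<And>x. pet_edge n k (g x) (g (x + \<delta>))"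
    and gc: "\<And>x y. x mod int n = y mod int n \<Longrightarrow> g x = g y"
    and L: "0 < L" and dv: "int n dvd int L * \<delta>"
  shows "cwalk n k (\<lambda>j. g (\<delta> * int j)) L"
  unfolding cwalk_def
proof (intro conjI allI impI)
  show "0 < L" by fact
  have "(\<delta> * int L) mod int n = 0 mod int n" using dv by (simp add: mult.commute)
  then have "(\<delta> * int L) mod int n = (\<delta> * int 0) mod int n" by simp
  then show "g (\<delta> * int L) = g (\<delta> * int 0)" by (rule gc)
  fix j assume "j < L"
  have "\<delta> * int (Suc j) = \<delta> * int j + \<delta>" by (simp add: algebra_simps)
  then show "pet_edge n k (g (\<delta> * int j)) (g (\<delta> * int (Suc j)))" using e[of "\<delta> * int j"] by simp
qed

lemma cost_parity: "odd (cost A B) \<longleftrightarrow> odd (A + B)"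
  unfolding cost_def by (auto simp: abs_if)

lemma cost_pos: "odd (A + B) \<Longrightarrow> 0 < cost A B"
  unfolding cost_def by (auto simp: abs_if)

lemma sgn_cases: "x \<noteq> (0::int) \<Longrightarrow> sgn x = 1 \<or> sgn x = -1"
  by (simp add: sgn_if)

lemma lat_walk:
  assumes n: "0 < n" and la: "lat n k A B"
  shows "\<exists>w. cwalk n k w (nat (cost A B))"
proof -
  have dv: "int n dvd A + int k * B" and od: "odd (A + B)" using la by (auto simp: lat_def)
  consider "B = 0" | "A = 0" | "A \<noteq> 0" "B \<noteq> 0" by blast
  then show ?thesis
  proof cases
    case 1
    then have A0: "A \<noteq> 0" using od by auto
    have c: "cost A B = \<bar>A\<bar>" using 1 by (simp add: cost_def)
    have "cwalk n k (\<lambda>j. uu n (sgn A * int j)) (nat \<bar>A\<bar>)"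
    proof (rule single_layer[OF n, where g="uu n" and \<delta>="sgn A"])
      show "pet_edge n k (uu n x) (uu n (x + sgn A))" for x using E1s[OF n sgn_cases[OF A0]] .
      show "uu n x = uu n y" if "x mod int n = y mod int n" for x y
        using that by (simp add: uu_def pos_def)
      show "0 < nat \<bar>A\<bar>" using A0 by simp
      have e: "int (nat \<bar>A\<bar>) * sgn A = A" by (metis abs_ge_zero int_nat_eq abs_mult_sgn)
      have "int n dvd A" using dv 1 by simp
      then show "int n dvd int (nat \<bar>A\<bar>) * sgn A" unfolding e .
    qed
    then show ?thesis unfolding c by blast
  next
    case 2
    then have B0: "B \<noteq> 0" using od by auto
    have c: "cost A B = \<bar>B\<bar>" using 2 by (simp add: cost_def)
    have "cwalk n k (\<lambda>j. vv n ((sgn B * int k) * int j)) (nat \<bar>B\<bar>)"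
    proof (rule single_layer[OF n, where g="vv n" and \<delta>="sgn B * int k"])
      show "pet_edge n k (vv n x) (vv n (x + sgn B * int k))" for x using E3s[OF n sgn_cases[OF B0]] .
      show "vv n x = vv n y" if "x mod int n = y mod int n" for x y
        using that by (simp add: vv_def pos_def)
      show "0 < nat \<bar>B\<bar>" using B0 by simp
      have e0: "int (nat \<bar>B\<bar>) * sgn B = B" by (metis abs_ge_zero int_nat_eq abs_mult_sgn)
      have e: "int (nat \<bar>B\<bar>) * (sgn B * int k) = int k * B"
        using e0 by (metis mult.assoc mult.commute)
      show "int n dvd int (nat \<bar>B\<bar>) * (sgn B * int k)" unfolding e using dv 2 by simp
    qed
    then show ?thesis unfolding c by blast
  next
    case 3
    define a where "a = nat \<bar>A\<bar>"
    define b where "b = nat \<bar>B\<bar>"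
    have c: "nat (cost A B) = a + b + 2" using 3 by (simp add: cost_def a_def b_def nat_add_distrib)
    define w where "w = (\<lambda>j. if j \<le> a then uu n (sgn A * int j)
       else if j \<le> a + b + 1 then vv n (A + sgn B * int k * (int j - int a - 1)) else uu n 0)"
    have sa: "sgn A * int a = A" by (simp add: a_def abs_mult_sgn mult.commute)
    have sb: "sgn B * int b = B" by (simp add: b_def abs_mult_sgn mult.commute)
    have "cwalk n k w (a + b + 2)"
      unfolding cwalk_def
    proof (intro conjI allI impI)
      show "0 < a + b + 2" by simp
      show "w (a + b + 2) = w 0" by (simp add: w_def)
      fix j assume j: "j < a + b + 2"
      consider "j < a" | "j = a" | "a < j" "j \<le> a + b" | "j = a + b + 1" using j by linarith
      then show "pet_edge n k (w j) (w (Suc j))"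
      proof cases
        case 1
        have "sgn A * int (Suc j) = sgn A * int j + sgn A" by (simp add: algebra_simps)
        then show ?thesis using 1 E1s[OF n sgn_cases[OF \<open>A \<noteq> 0\<close>]] by (simp add: w_def)
      next
        case 2
        then show ?thesis using E2[OF n, where x=A and k=k] sa by (simp add: w_def)
      next
        case 3
        define X where "X = A + sgn B * int k * (int j - int a - 1)"
        have "A + sgn B * int k * (int (Suc j) - int a - 1) = X + sgn B * int k"
          by (simp add: algebra_simps X_def)
        then have e1: "w (Suc j) = vv n (X + sgn B * int k)"
          using 3 by (simp add: w_def X_def add.assoc)
        have e2: "w j = vv n X" using 3 by (simp add: w_def X_def)
        show ?thesis unfolding e1 e2 by (rule E3s[OF n sgn_cases[OF \<open>B \<noteq> 0\<close>]])
      next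
        case 4
        have "int j - int a - 1 = int b" using 4 by simp
        then have "sgn B * int k * (int j - int a - 1) = int k * (sgn B * int b)"
          by (simp add: algebra_simps)
        then have eqf: "A + sgn B * int k * (int j - int a - 1) = A + int k * B"
          using sb by simp
        have e0: "w j = vv n (A + sgn B * int k * (int j - int a - 1))" using 4 by (simp add: w_def)
        have e1: "w j = vv n (A + int k * B)" by (simp only: e0 eqf)
        have "(A + int k * B) mod int n = 0 mod int n" using dv by simp
        then have "vv n (A + int k * B) = vv n 0"
          by (simp_all add: vv_def pos_def)
        moreover have "w (Suc j) = uu n 0" using 4 by (simp add: w_def)
        ultimately have "w j = vv n 0" "w (Suc j) = uu n 0" using e1 by simp_all
        then show ?thesis using E2[OF n, where x=0 and k=k] pet_edge_sym by metis
      qed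
    qed
    then show ?thesis unfolding c by blast
  qed
qed

lemma lat_cycle:
  assumes n: "2 \<le> n" and k: "0 < k" "k < n" and la: "lat n k A B"
  shows "\<exists>vs. pet_cycle n k vs \<and> odd (length vs) \<and> int (length vs) \<le> cost A B"
proof -
  obtain w where w: "cwalk n k w (nat (cost A B))" using lat_walk la n by fastforce
  have "odd (cost A B)" "0 < cost A B" using la cost_parity cost_pos by (auto simp: lat_def)
  then have "odd (nat (cost A B))" by (simp add: even_nat_iff)
  from walk_to_cycle[OF w this pet_no_loop[OF n k]] obtain vs where
    "pet_cycle n k vs" "odd (length vs)" "length vs \<le> nat (cost A B)" by blast
  moreover have "int (length vs) \<le> cost A B" using le_nat_iff[of "cost A B" "length vs"] calculation(3) `0 < cost A B` by linarith
  ultimately show ?thesis by blast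
qed


definition oa :: "nat \<Rightarrow> bool \<times> nat \<Rightarrow> bool \<times> nat \<Rightarrow> int" where
  "oa n x y = (if \<not> fst x \<and> \<not> fst y then (if snd y = (snd x + 1) mod n then 1 else -1) else 0)"
definition ib :: "nat \<Rightarrow> nat \<Rightarrow> bool \<times> nat \<Rightarrow> bool \<times> nat \<Rightarrow> int" where
  "ib n k x y = (if fst x \<and> fst y then (if snd y = (snd x + k) mod n then 1 else -1) else 0)"
definition sp :: "bool \<times> nat \<Rightarrow> bool \<times> nat \<Rightarrow> int" where
  "sp x y = (if fst x \<noteq> fst y then 1 else 0)"

lemma modint: "int ((a + c) mod n) mod int n = (int a + int c) mod int n"
  by (simp add: zmod_int)

lemma modint_suc: "int (Suc i mod n) mod int n = (int i + 1) mod int n"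
  using modint[of i 1 n] by simp

lemma edge_step:
  assumes e: "pet_edge n k x y"
  shows "int (snd y) mod int n = (int (snd x) + oa n x y + int k * ib n k x y) mod int n"
    and "\<bar>oa n x y\<bar> + \<bar>ib n k x y\<bar> + sp x y = 1"
    and "oa n x y \<noteq> 0 \<Longrightarrow> \<not> fst x"
    and "ib n k x y \<noteq> 0 \<Longrightarrow> fst x"
    and "sp x y = 0 \<Longrightarrow> fst y = fst x"
proof -
  obtain i where i: "i < n" and
    c: "{x, y} = {(False, i), (False, (i + 1) mod n)} \<or> {x, y} = {(False, i), (True, i)} \<or>
        {x, y} = {(True, i), (True, (i + k) mod n)}"
    using e unfolding pet_edge_def by auto
  have P: "int (snd y) mod int n = (int (snd x) + oa n x y + int k * ib n k x y) mod int n
    \<and> \<bar>oa n x y\<bar> + \<bar>ib n k x y\<bar> + sp x y = 1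
    \<and> (oa n x y \<noteq> 0 \<longrightarrow> \<not> fst x) \<and> (ib n k x y \<noteq> 0 \<longrightarrow> fst x)
    \<and> (sp x y = 0 \<longrightarrow> fst y = fst x)"
  proof -
    consider "x = (False, i)" "y = (False, (i + 1) mod n)"
      | "y = (False, i)" "x = (False, (i + 1) mod n)"
      | "x = (False, i)" "y = (True, i)"
      | "y = (False, i)" "x = (True, i)"
      | "x = (True, i)" "y = (True, (i + k) mod n)"
      | "y = (True, i)" "x = (True, (i + k) mod n)"
      using c by (auto simp: doubleton_eq_iff)
    then show ?thesis
    proof cases
      case 1 then show ?thesis by (simp add: oa_def ib_def sp_def modint modint_suc)
    next
      case 2
      show ?thesis
      proof (cases "snd y = (snd x + 1) mod n")
        case True
        have "int (snd y) mod int n = (int (snd x) + 1) mod int n"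
          using True modint[of "snd x" 1 n] by simp
        then show ?thesis using 2 True by (simp add: oa_def ib_def sp_def)
      next
        case False
        have "int i mod int n = (int ((i + 1) mod n) - 1) mod int n"
          by (simp add: zmod_int mod_diff_left_eq)
        then show ?thesis using 2 False by (simp add: oa_def ib_def sp_def)
      qed
    next
      case 3 then show ?thesis by (simp add: oa_def ib_def sp_def)
    next
      case 4 then show ?thesis by (simp add: oa_def ib_def sp_def)
    next
      case 5 then show ?thesis by (simp add: oa_def ib_def sp_def modint modint_suc)
    next
      case 6
      show ?thesis
      proof (cases "snd y = (snd x + k) mod n")
        case True
        have "int (snd y) mod int n = (int (snd x) + int k) mod int n"
          using True modint[of "snd x" k n] by simp
        then show ?thesis using 6 True by (simp add: oa_def ib_def sp_def)
      next
        case False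
        have "int i mod int n = (int ((i + k) mod n) - int k) mod int n"
          by (simp add: zmod_int mod_diff_left_eq)
        then show ?thesis using 6 False by (simp add: oa_def ib_def sp_def)
      qed
    qed
  qed
  then show "int (snd y) mod int n = (int (snd x) + oa n x y + int k * ib n k x y) mod int n"
    and "\<bar>oa n x y\<bar> + \<bar>ib n k x y\<bar> + sp x y = 1"
    and "oa n x y \<noteq> 0 \<Longrightarrow> \<not> fst x"
    and "ib n k x y \<noteq> 0 \<Longrightarrow> fst x"
    and "sp x y = 0 \<Longrightarrow> fst y = fst x" by auto
qed

lemma sp_cases: "sp x y = 0 \<or> sp x y = 1"
  by (simp add: sp_def)

lemma sp_flip: "sp x y = 1 \<Longrightarrow> fst y = (\<not> fst x)"
  by (cases "fst x"; cases "fst y"; simp add: sp_def)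

lemma even_abs_minus: "even (\<bar>x\<bar> - (x::int))"
  by (simp add: abs_if)

lemma cycle_lat:
  assumes cyc: "pet_cycle n k vs" and od: "odd (length vs)"
  shows "\<exists>A B. lat n k A B \<and> cost A B \<le> int (length vs)"
proof -
  define l where "l = length vs"
  have l3: "3 \<le> l" using cyc by (simp add: pet_cycle_def l_def)
  define w where "w = (\<lambda>j. vs ! (j mod l))"
  have ed: "\<forall>j<l. pet_edge n k (w j) (w (Suc j))"
  proof (intro allI impI)
    fix j assume j: "j < l"
    show "pet_edge n k (w j) (w (Suc j))"
    proof (cases "Suc j < l")
      case True
      then show ?thesis using cyc j by (simp add: w_def pet_cycle_def l_def)
    next
      case False
      then have "Suc j = l" using j by simp
      have ne: "vs \<noteq> []" using l3 l_def by auto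
      have "j = length vs - 1" using \<open>Suc j = l\<close> l_def by simp
      then have "w j = vs ! (length vs - 1)" using j by (simp add: w_def)
      then have "w j = last vs" using ne by (simp add: last_conv_nth)
      moreover have "w (Suc j) = vs ! 0" using \<open>Suc j = l\<close> by (simp add: w_def)
      then have "w (Suc j) = hd vs" using ne by (simp add: hd_conv_nth)
      ultimately show ?thesis using cyc by (simp add: pet_cycle_def)
    qed
  qed
  have wl: "w l = w 0" by (simp add: w_def)
  define a where "a = (\<lambda>j. oa n (w j) (w (Suc j)))"
  define b where "b = (\<lambda>j. ib n k (w j) (w (Suc j)))"
  define s where "s = (\<lambda>j. sp (w j) (w (Suc j)))"
  define A where "A = (\<Sum>j<l. a j)"
  define B where "B = (\<Sum>j<l. b j)"
  define S where "S = (\<Sum>j<l. s j)"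
  have tele: "m \<le> l \<Longrightarrow> int (snd (w m)) mod int n =
      (int (snd (w 0)) + (\<Sum>j<m. a j) + int k * (\<Sum>j<m. b j)) mod int n" for m
  proof (induction m)
    case 0 then show ?case by simp
  next
    case (Suc m)
    then have m: "m < l" by simp
    have "int (snd (w (Suc m))) mod int n = (int (snd (w m)) + a m + int k * b m) mod int n"
      using edge_step(1)[OF ed[rule_format, OF m]] by (simp add: a_def b_def)
    also have "\<dots> = (int (snd (w m)) mod int n + a m + int k * b m) mod int n"
      by (metis mod_add_left_eq add.assoc)
    also have "\<dots> = ((int (snd (w 0)) + (\<Sum>j<m. a j) + int k * (\<Sum>j<m. b j)) mod int n
        + a m + int k * b m) mod int n" using Suc m by simp
    also have "\<dots> = ((int (snd (w 0)) + (\<Sum>j<m. a j) + int k * (\<Sum>j<m. b j)) mod int n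
        + (a m + int k * b m)) mod int n" by (simp only: add.assoc)
    also have "\<dots> = ((int (snd (w 0)) + (\<Sum>j<m. a j) + int k * (\<Sum>j<m. b j))
        + (a m + int k * b m)) mod int n" by (rule mod_add_left_eq)
    also have "\<dots> = (int (snd (w 0)) + (\<Sum>j<Suc m. a j) + int k * (\<Sum>j<Suc m. b j)) mod int n"
      by (simp add: algebra_simps)
    finally show ?case .
  qed
  have layer: "m \<le> l \<Longrightarrow> fst (w m) = (fst (w 0) = even (\<Sum>j<m. s j))" for m
  proof (induction m)
    case 0 then show ?case by simp
  next
    case (Suc m)
    then have m: "m < l" by simp
    consider "s m = 0" | "s m = 1" using sp_cases s_def by blast
    then show ?case
    proof cases
      case 1
      then have "fst (w (Suc m)) = fst (w m)" using edge_step(5)[OF ed[rule_format, OF m]] s_def by simp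
      then show ?thesis using Suc 1 by simp
    next
      case 2
      then have "fst (w (Suc m)) = (\<not> fst (w m))" using sp_flip s_def by simp
      then show ?thesis using Suc 2 by auto
    qed
  qed
  have dv: "int n dvd A + int k * B"
  proof -
    have "int (snd (w 0)) mod int n = (int (snd (w 0)) + (A + int k * B)) mod int n"
      using tele[of l] wl by (simp add: A_def B_def add.assoc)
    then have "int n dvd (int (snd (w 0)) + (A + int k * B)) - int (snd (w 0))"
      using mod_eq_dvd_iff by metis
    then show ?thesis by simp
  qed
  have Sev: "even S" using layer[of l] wl unfolding S_def by (cases "fst (w 0)") auto
  have one: "\<bar>a j\<bar> + \<bar>b j\<bar> + s j = 1" if "j < l" for j
    using edge_step(2)[OF ed[rule_format, OF that]] unfolding a_def b_def s_def .
  have lsum: "int l = (\<Sum>j<l. \<bar>a j\<bar>) + (\<Sum>j<l. \<bar>b j\<bar>) + S"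
  proof -
    have "int l = (\<Sum>j<l. (1::int))" by simp
    also have "\<dots> = (\<Sum>j<l. \<bar>a j\<bar> + \<bar>b j\<bar> + s j)" using one by (intro sum.cong) auto
    also have "\<dots> = (\<Sum>j<l. \<bar>a j\<bar>) + (\<Sum>j<l. \<bar>b j\<bar>) + S" by (simp add: sum.distrib S_def)
    finally show ?thesis .
  qed
  have ea: "even ((\<Sum>j<l. \<bar>a j\<bar>) - A)"
  proof -
    have "(\<Sum>j<l. \<bar>a j\<bar>) - A = (\<Sum>j<l. \<bar>a j\<bar> - a j)" by (simp add: A_def sum_subtractf)
    moreover have "even (\<Sum>j<l. \<bar>a j\<bar> - a j)" by (intro dvd_sum) (simp add: even_abs_minus)
    ultimately show ?thesis by simp
  qed
  have eb: "even ((\<Sum>j<l. \<bar>b j\<bar>) - B)"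
  proof -
    have "(\<Sum>j<l. \<bar>b j\<bar>) - B = (\<Sum>j<l. \<bar>b j\<bar> - b j)" by (simp add: B_def sum_subtractf)
    moreover have "even (\<Sum>j<l. \<bar>b j\<bar> - b j)" by (intro dvd_sum) (simp add: even_abs_minus)
    ultimately show ?thesis by simp
  qed
  have oddl: "odd (int l)" using od by (simp add: l_def)
  have oAB: "odd (A + B)"
  proof -
    define E where "E = ((\<Sum>j<l. \<bar>a j\<bar>) - A) + ((\<Sum>j<l. \<bar>b j\<bar>) - B) + S"
    have Ee: "even E" using ea eb Sev unfolding E_def by simp
    have "int l = (A + B) + E" using lsum unfolding E_def by simp
    then have "odd ((A + B) + E)" using oddl by simp
    then show ?thesis using Ee by (simp only: even_add) blast
  qed
  have aA: "\<bar>A\<bar> \<le> (\<Sum>j<l. \<bar>a j\<bar>)" unfolding A_def by (rule sum_abs)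
  have bB: "\<bar>B\<bar> \<le> (\<Sum>j<l. \<bar>b j\<bar>)" unfolding B_def by (rule sum_abs)
  have S0: "0 \<le> S" unfolding S_def s_def by (intro sum_nonneg) (simp add: sp_def)
  have S2: "2 \<le> S" if "A \<noteq> 0" "B \<noteq> 0"
  proof (rule ccontr)
    assume "\<not> 2 \<le> S"
    then have "S = 0" using S0 Sev by presburger
    then have sz: "\<forall>j<l. s j = 0"
      unfolding S_def using sum_nonneg_eq_0_iff[of "{..<l}" s] by (simp add: s_def sp_def)
    have cst: "m \<le> l \<Longrightarrow> fst (w m) = fst (w 0)" for m
    proof (induction m)
      case 0 then show ?case by simp
    next
      case (Suc m)
      then have m: "m < l" by simp
      then show ?case using edge_step(5)[OF ed[rule_format, OF m]] sz s_def Suc by simp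
    qed
    have "\<exists>j<l. a j \<noteq> 0"
    proof (rule ccontr)
      assume "\<not> (\<exists>j<l. a j \<noteq> 0)"
      then have "A = 0" unfolding A_def by (intro sum.neutral) auto
      then show False using \<open>A \<noteq> 0\<close> by simp
    qed
    then obtain j1 where j1: "j1 < l" "a j1 \<noteq> 0" by blast
    have "\<exists>j<l. b j \<noteq> 0"
    proof (rule ccontr)
      assume "\<not> (\<exists>j<l. b j \<noteq> 0)"
      then have "B = 0" unfolding B_def by (intro sum.neutral) auto
      then show False using \<open>B \<noteq> 0\<close> by simp
    qed
    then obtain j2 where j2: "j2 < l" "b j2 \<noteq> 0" by blast
    have "\<not> fst (w j1)" using edge_step(3)[OF ed[rule_format, OF j1(1)]] j1 a_def by simp
    moreover have "fst (w j2)" using edge_step(4)[OF ed[rule_format, OF j2(1)]] j2 b_def by simp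
    moreover have "fst (w j1) = fst (w 0)" using cst[of j1] j1(1) by linarith
    moreover have "fst (w j2) = fst (w 0)" using cst[of j2] j2(1) by linarith
    ultimately show False by simp
  qed
  have ab0: "0 \<le> (\<Sum>j<l. \<bar>a j\<bar>)" "0 \<le> (\<Sum>j<l. \<bar>b j\<bar>)" by (auto intro: sum_nonneg)
  have "cost A B \<le> int l"
  proof (cases "A \<noteq> 0 \<and> B \<noteq> 0")
    case True then show ?thesis using S2 lsum aA bB by (simp add: cost_def)
  next
    case False
    then have "cost A B = \<bar>A\<bar> \<or> cost A B = \<bar>B\<bar>" by (auto simp: cost_def)
    then show ?thesis using lsum aA bB S0 ab0 by linarith
  qed
  then have "lat n k A B \<and> cost A B \<le> int (length vs)" using dv oAB by (simp add: lat_def l_def)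
  then show ?thesis by blast
qed


lemma le_div_of_mult: "0 < (K::int) \<Longrightarrow> K * q \<le> a \<Longrightarrow> q \<le> a div K"
  by (metis nonzero_mult_div_cancel_left order.strict_implies_not_eq zdiv_mono1)

lemma ceil_div: "0 < (K::int) \<Longrightarrow> - ((- x) div K) = (if x mod K = 0 then x div K else x div K + 1)"
  by (simp add: zdiv_zminus1_eq_if)

lemma G_alt: "G_set n k = (\<Union>t\<in>Ind n k.
     {t * int n + (1 - int k) * ((t * int n) div int k) + 2,
      (1 + int k) * (- ((- (t * int n)) div int k)) - t * int n + 2})"
proof -
  have fl: "\<lfloor>real_of_int x / real k\<rfloor> = x div int k" for x
    using floor_divide_of_int_eq[of x "int k", where 'a=real] by simp
  have ce: "\<lceil>real_of_int x / real k\<rceil> = - ((- x) div int k)" for x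
  proof -
    have H: "\<lceil>real_of_int x / real k\<rceil> = - \<lfloor>real_of_int (- x) / real k\<rfloor>"
      by (simp add: ceiling_def)
    show ?thesis using H fl[of "- x"] by metis
  qed
  show ?thesis unfolding G_set_def fl ce ..
qed

lemma step1:
  fixes K q A B :: int
  assumes K: "0 < K" and B0: "0 < B" and eq: "A + K * B = q" and od: "odd (A + B)"
  defines "f \<equiv> q div K" and "r \<equiv> q mod K"
  defines "c \<equiv> (if r = 0 then f else f + 1)"
  shows "(\<exists>Bs. (Bs = f \<or> Bs = c) \<and> odd (q - K * Bs + Bs) \<and> \<bar>q - K * Bs\<bar> + Bs \<le> \<bar>A\<bar> + B)
         \<or> (even K \<and> K + 1 \<le> \<bar>A\<bar> + B)"
proof -
  have qf: "q = K * f + r" by (simp add: f_def r_def)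
  have r0: "0 \<le> r" "r < K" using K by (auto simp: r_def)
  have par: "odd (q - K * x + x) \<longleftrightarrow> odd (A + B) \<noteq> odd ((K - 1) * (B - x))" for x
  proof -
    have "q - K * x + x = (A + B) + (K - 1) * (B - x)" using eq by (simp add: algebra_simps)
    then show ?thesis by (simp only: even_add) blast
  qed
  have flip: "even K \<and> odd (B - x)" if "\<not> odd (q - K * x + x)" for x
    using that par od by auto
  show ?thesis
  proof (cases "r = 0")
    case True
    then have cf: "c = f" by (simp add: c_def)
    have Af: "A = K * (f - B)" using eq qf True by (simp add: algebra_simps)
    show ?thesis
    proof (cases "odd (q - K * f + f)")
      case True
      have "\<bar>f - B\<bar> \<le> K * \<bar>f - B\<bar>" using mult_right_mono[of 1 K "\<bar>f - B\<bar>"] K by simp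
      then have "\<bar>f - B\<bar> \<le> \<bar>A\<bar>" using Af K by (simp add: abs_mult)
      then have "f \<le> \<bar>A\<bar> + B" by linarith
      moreover have "q - K * f = 0" using qf \<open>r = 0\<close> by simp
      ultimately show ?thesis using True by auto
    next
      case False
      then have "even K" "B - f \<noteq> 0" using flip[of f] by auto
      then have "1 \<le> \<bar>f - B\<bar>" by linarith
      then have "K \<le> K * \<bar>f - B\<bar>" using mult_left_mono[of 1 "\<bar>f - B\<bar>" K] K by simp
      then have "K \<le> \<bar>A\<bar>" using Af K by (simp add: abs_mult)
      then show ?thesis using \<open>even K\<close> B0 by auto
    qed
  next
    case False
    then have r1: "1 \<le> r" using r0 by simp
    have cf: "c = f + 1" using False by (simp add: c_def)
    show ?thesis
    proof (cases "B \<le> f")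
      case True
      have KB: "K * B \<le> K * f" using True K by simp
      have "0 \<le> A" using eq KB qf r0 by linarith
      then have hA: "\<bar>A\<bar> = q - K * B" using eq by simp
      have m: "0 \<le> (K - 1) * (f - B)" using True K by simp
      show ?thesis
      proof (cases "odd (q - K * f + f)")
        case True
        have "\<bar>q - K * f\<bar> + f \<le> \<bar>A\<bar> + B" using hA qf r0 m by (simp add: algebra_simps)
        then show ?thesis using True by auto
      next
        case False
        then have ek: "even K" and ob: "odd (B - f)" using flip[of f] by auto
        then have "B \<le> f - 1" using \<open>B \<le> f\<close> by (cases "B = f") auto
        then have "K - 1 \<le> (K - 1) * (f - B)" using K mult_left_mono[of 1 "f - B" "K - 1"] by simp
        moreover have "odd (q - K * (f + 1) + (f + 1))"
        proof -
          have "q - K * (f + 1) + (f + 1) = (q - K * f + f) - (K - 1)" by (simp add: algebra_simps)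
          then show ?thesis using False ek by simp
        qed
        moreover have "\<bar>q - K * (f + 1)\<bar> = K - r" using qf r0 by (simp add: algebra_simps)
        ultimately have "\<bar>q - K * (f + 1)\<bar> + (f + 1) \<le> \<bar>A\<bar> + B"
          using hA qf r1 by (simp add: algebra_simps)
        then show ?thesis using \<open>odd (q - K * (f + 1) + (f + 1))\<close> cf by auto
      qed
    next
      case False
      then have B1: "f + 1 \<le> B" by simp
      have KB: "K * (f + 1) \<le> K * B" using B1 K by simp
      have "A \<le> 0" using eq KB qf r0 by (simp add: algebra_simps)
      then have hA: "\<bar>A\<bar> = K * B - q" using eq by simp
      have m: "0 \<le> (K + 1) * (B - (f + 1))" using B1 K by simp
      show ?thesis
      proof (cases "odd (q - K * (f + 1) + (f + 1))")
        case True
        have "\<bar>q - K * (f + 1)\<bar> = K - r" using qf r0 by (simp add: algebra_simps)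
        then have "\<bar>q - K * (f + 1)\<bar> + (f + 1) \<le> \<bar>A\<bar> + B" using hA qf m by (simp add: algebra_simps)
        then show ?thesis using True cf by auto
      next
        case False
        then have ek: "even K" and ob: "odd (B - (f + 1))" using flip[of "f + 1"] by auto
        then have "f + 2 \<le> B" using B1 by (cases "B = f + 1") auto
        then have "2 * K \<le> K * (B - f)" using K by (simp add: mult_left_mono)
        moreover have "odd (q - K * f + f)"
        proof -
          have "q - K * (f + 1) + (f + 1) = (q - K * f + f) - (K - 1)" by (simp add: algebra_simps)
          then show ?thesis using False ek by simp
        qed
        moreover have "\<bar>q - K * f\<bar> = r" using qf r0 by simp
        moreover have "K * (B - f) = K * B - K * f" by (simp add: algebra_simps)
        ultimately have "\<bar>q - K * f\<bar> + f \<le> \<bar>A\<bar> + B"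
          using hA qf r0 \<open>f + 2 \<le> B\<close> by linarith
        then show ?thesis using \<open>odd (q - K * f + f)\<close> by auto
      qed
    qed
  qed
qed


locale petk =
  fixes n k :: nat
  assumes k2: "2 < 2 * k" and kn: "2 * k \<le> n" and nb: "\<not> (even n \<and> odd k)"
begin

definition "dd = gcd n k"
definition "n' = n div dd"
definition "k' = k div dd"
definition "Sset = ({int n', int k + 3} \<union> G_set n k)"
definition "bnd = ((int k - 1)^2) div int n"
definition "PP = (if even n' then 1 else 2::nat)"
definition "tt = int (PP * k')"
definition "bb = int (PP * n')"

lemma basic: "2 \<le> k" "4 \<le> n" "0 < dd" "n = dd * n'" "k = dd * k'" "1 \<le> k'" "1 \<le> n'"
  "coprime n' k'"
proof -
  show "2 \<le> k" using k2 by simp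
  then show "4 \<le> n" using kn by simp
  then show dp: "0 < dd" by (simp add: dd_def)
  show "n = dd * n'" by (simp add: dd_def n'_def)
  show "k = dd * k'" by (simp add: dd_def k'_def)
  then show "1 \<le> k'" using \<open>2 \<le> k\<close> by (cases "k' = 0") auto
  show "1 \<le> n'" using \<open>n = dd * n'\<close> \<open>4 \<le> n\<close> by (cases "n' = 0") auto
  show "coprime n' k'" unfolding n'_def k'_def dd_def
    using \<open>2 \<le> k\<close> by (intro div_gcd_coprime) auto
qed

lemma Kbb: "int k * bb = int n * tt"
proof -
  have "k * n' = n * k'" using basic(4,5) by (metis mult.assoc mult.commute)
  then have "int k * int n' = int n * int k'" by (metis of_nat_mult)
  then show ?thesis by (simp add: bb_def tt_def algebra_simps)
qed

lemma bb_even: "even bb"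
  by (simp add: bb_def PP_def)

lemma tt_pos: "1 \<le> tt"
  using basic(6) by (simp add: tt_def PP_def)

lemma bb_nonneg: "0 \<le> bb" by (simp add: bb_def)

lemma bnd_nonneg: "0 \<le> bnd" using basic by (simp add: bnd_def pos_imp_zdiv_nonneg_iff)

lemma bnd_prop: "(int k - 1)^2 < (bnd + 1) * int n"
proof -
  have n: "0 < int n" using basic by simp
  have "(int k - 1)^2 = bnd * int n + (int k - 1)^2 mod int n"
    by (simp add: bnd_def)
  moreover have "(int k - 1)^2 mod int n < int n" using n by simp
  ultimately show ?thesis by (simp add: algebra_simps)
qed

lemma nd_dvd: "int n dvd int k * X \<Longrightarrow> int n' dvd X"
proof -
  assume h: "int n dvd int k * X"
  have "int dd * int n' dvd int dd * (int k' * X)" using h basic(4,5)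
    by (metis mult.assoc of_nat_mult)
  then have "int n' dvd int k' * X" using basic(3) by simp
  moreover have "coprime (int n') (int k')" using basic(8) by simp
  ultimately show ?thesis using coprime_dvd_mult_right_iff by blast
qed

lemma n'_dvd_n: "int n' dvd int n" using basic(4) by (metis dvd_triv_right of_nat_dvd_iff)

lemma nd_case: "int n' dvd X \<Longrightarrow> odd X \<Longrightarrow> \<exists>m\<in>Sset. odd m \<and> m \<le> \<bar>X\<bar>"
proof -
  assume h: "int n' dvd X" "odd X"
  then have "odd (int n')" using dvd_trans by blast
  moreover have "int n' \<le> \<bar>X\<bar>"
  proof -
    have "int n' dvd \<bar>X\<bar>" using h(1) by simp
    moreover have "0 < \<bar>X\<bar>" using h(2) by (cases "X = 0") auto
    ultimately show ?thesis by (rule zdvd_imp_le)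
  qed
  ultimately show ?thesis by (auto simp: Sset_def)
qed

lemma k3_case: "even k \<Longrightarrow> int k + 3 \<le> X \<Longrightarrow> \<exists>m\<in>Sset. odd m \<and> m \<le> X"
  by (auto simp: Sset_def intro!: bexI[of _ "int k + 3"])

lemma oddk_oddn: "odd k \<Longrightarrow> odd n" using nb by auto

lemma oddn_oddn': "odd n \<Longrightarrow> odd n'" using basic(4) by (metis dvd_mult even_mult_iff)

lemma Ind_mem:
  assumes t1: "1 \<le> t" and tt: "t \<le> tt"
    and c: "if odd k then odd t \<and> t \<le> bnd + 1 else t \<le> bnd"
  shows "t \<in> Ind n k"
proof -
  have dv: "dd dvd k" by (simp add: dd_def)
  have e2: "2 * k div dd = 2 * k'" using dv by (simp add: k'_def div_mult_swap)
  show ?thesis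
  proof (cases "odd k")
    case True
    then have "odd n" "odd n'" using oddk_oddn oddn_oddn' by auto
    then have "tt = int (2 * k')" by (simp add: tt_def PP_def)
    then show ?thesis using True \<open>odd n\<close> t1 tt c unfolding Ind_def
      by (simp add: Let_def dd_def[symmetric] e2 bnd_def[symmetric] n'_def[symmetric])
  next
    case False
    show ?thesis
    proof (cases "odd n'")
      case True
      then have "tt = int (2 * k')" by (simp add: tt_def PP_def)
      then show ?thesis using True False t1 tt c unfolding Ind_def
        by (simp add: Let_def dd_def[symmetric] e2 bnd_def[symmetric] n'_def[symmetric])
    next
      case F2: False
      then have "tt = int k'" by (simp add: tt_def PP_def)
      then show ?thesis using F2 False t1 tt c unfolding Ind_def
        by (simp add: Let_def dd_def[symmetric] e2 bnd_def[symmetric] n'_def[symmetric] k'_def[symmetric])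
    qed
  qed
qed

end


lemma odd_plus2: "odd (x::int) \<Longrightarrow> odd (x + 2)" by simp
lemma odd_plus2y: "odd (x::int) \<Longrightarrow> odd (x + 2 * y)" by simp

context petk
begin

lemma Gval1: "t \<in> Ind n k \<Longrightarrow> t * int n + (1 - int k) * ((t * int n) div int k) + 2 \<in> Sset"
  unfolding Sset_def G_alt by blast

lemma Gval2: "t \<in> Ind n k \<Longrightarrow> (1 + int k) * (- ((- (t * int n)) div int k)) - t * int n + 2 \<in> Sset"
  unfolding Sset_def G_alt by blast

lemma ind_val:
  assumes tI: "t \<in> Ind n k"
    and Bs: "Bs = t * int n div int k \<or>
             Bs = (if t * int n mod int k = 0 then t * int n div int k else t * int n div int k + 1)"
    and od: "odd (t * int n - int k * Bs + Bs)"
  shows "\<exists>m\<in>Sset. odd m \<and> m = \<bar>t * int n - int k * Bs\<bar> + Bs + 2"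
proof -
  define K where "K = int k"
  define q where "q = t * int n"
  define f where "f = q div K"
  define r where "r = q mod K"
  have K: "0 < K" using basic by (simp add: K_def)
  have qf: "q = K * f + r" by (simp add: f_def r_def)
  have r0: "0 \<le> r" "r < K" using K by (auto simp: r_def)
  have od': "odd (q - K * Bs + Bs)" using od unfolding q_def K_def .
  have case_f: ?thesis if "Bs = f"
  proof -
    have m: "q + (1 - K) * f + 2 = \<bar>q - K * Bs\<bar> + Bs + 2"
      using that qf r0 by (simp add: algebra_simps)
    have "q + (1 - K) * f + 2 \<in> Sset" using Gval1[OF tI] by (simp add: q_def K_def f_def)
    moreover have "odd (q + (1 - K) * f + 2)"
    proof -
      have e: "q + (1 - K) * f + 2 = (q - K * Bs + Bs) + 2" using that by (simp add: algebra_simps)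
      show ?thesis unfolding e by (rule odd_plus2[OF od'])
    qed
    ultimately show ?thesis using m unfolding K_def q_def by auto
  qed
  show ?thesis
  proof (cases "Bs = f")
    case True then show ?thesis by (rule case_f)
  next
    case False
    then have rn: "r \<noteq> 0" and Bc: "Bs = f + 1"
      using Bs by (auto simp: q_def K_def f_def r_def split: if_splits)
    have ce: "- ((- q) div K) = f + 1" using K rn by (simp add: ceil_div f_def r_def)
    have m: "(1 + K) * (f + 1) - q + 2 = \<bar>q - K * Bs\<bar> + Bs + 2"
      using Bc qf r0 by (simp add: algebra_simps)
    have ce': "- ((- (t * int n)) div int k) = f + 1" using ce by (simp add: q_def K_def)
    have "(1 + K) * (f + 1) - q + 2 \<in> Sset" using Gval2[OF tI, unfolded ce'] by (simp add: q_def K_def)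
    moreover have "odd ((1 + K) * (f + 1) - q + 2)"
    proof -
      have e: "(1 + K) * (f + 1) - q + 2 = (q - K * Bs + Bs) + 2 * (K * Bs - q + 1)"
        using Bc by (simp add: algebra_simps)
      show ?thesis unfolding e by (rule odd_plus2y[OF od'])
    qed
    ultimately show ?thesis using m unfolding K_def q_def by auto
  qed
qed

lemma Kpos: "0 < int k" using basic by simp
lemma NK: "2 * int k \<le> int n" using kn by linarith

lemma core:
  assumes "1 \<le> t" "0 < B" "A \<noteq> 0" "A + int k * B = t * int n" "odd (A + B)"
  shows "\<exists>m\<in>Sset. odd m \<and> m \<le> \<bar>A\<bar> + B + 2"
  using assms
proof (induction "nat t" arbitrary: t A B rule: less_induct)
  case less
  define K where "K = int k"
  define N where "N = int n"
  define q where "q = t * N"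
  define f where "f = q div K"
  define r where "r = q mod K"
  define c where "c = (if r = 0 then f else f + 1)"
  have K: "0 < K" using Kpos by (simp add: K_def)
  have NK2: "2 * K \<le> N" using NK by (simp add: K_def N_def)
  have qf: "q = K * f + r" by (simp add: f_def r_def)
  have r0: "0 \<le> r" "r < K" using K by (auto simp: r_def)
  have Nq: "N \<le> q" using less.prems(1) NK2 K mult_right_mono[of 1 t N] by (simp add: q_def)
  have f2: "2 \<le> f" unfolding f_def using K NK2 Nq by (intro le_div_of_mult) auto
  have eq: "A + K * B = q" using less.prems(4) by (simp add: K_def N_def q_def)
  from step1[OF K less.prems(2) eq less.prems(5)]
  consider (k3) "even K" "K + 1 \<le> \<bar>A\<bar> + B"
    | (bs) Bs where "Bs = q div K \<or> Bs = (if q mod K = 0 then q div K else q div K + 1)"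
      "odd (q - K * Bs + Bs)" "\<bar>q - K * Bs\<bar> + Bs \<le> \<bar>A\<bar> + B"
    by blast
  then show ?case
  proof cases
    case k3
    then show ?thesis using k3_case[of "\<bar>A\<bar> + B + 2"] by (simp add: K_def)
  next
    case (bs Bs)
    note Bsfc = bs(1) and oBs = bs(2) and hle = bs(3)
    define As where "As = q - K * Bs"
    have Bsf: "f \<le> Bs" "Bs \<le> f + 1" using Bsfc by (auto simp: f_def)
    have Bs_c: "Bs = f \<or> Bs = c" using Bsfc by (cases "q mod K = 0") (simp_all add: f_def r_def c_def)
    have oAs: "odd (As + Bs)" using oBs by (simp add: As_def)
    have hle': "\<bar>As\<bar> + Bs \<le> \<bar>A\<bar> + B" using hle by (simp add: As_def)
    show ?thesis
    proof (cases "As = 0")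
      case True
      then have "int k * Bs = t * int n" using As_def q_def N_def K_def by simp
      then have "int n dvd int k * Bs" by (metis dvd_triv_right)
      then have "int n' dvd Bs" by (rule nd_dvd)
      moreover have "odd Bs" using oAs True by simp
      ultimately obtain m where "m \<in> Sset" "odd m" "m \<le> \<bar>Bs\<bar>" using nd_case by blast
      then show ?thesis using hle' True f2 Bsf by (intro bexI[of _ m]) auto
    next
      case As0: False
      show ?thesis
      proof (cases "tt < t")
        case True
        define t' where "t' = t - tt"
        define B' where "B' = Bs - bb"
        have t'1: "1 \<le> t'" using True by (simp add: t'_def)
        have lt: "nat t' < nat t" using tt_pos True by (simp add: t'_def)
        have "N \<le> t' * N" using t'1 NK2 K mult_right_mono[of 1 t' N] by simp
        moreover have "K * B' = K * Bs - N * tt" using Kbb by (simp add: B'_def K_def N_def algebra_simps)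
        moreover have "K * f \<le> K * Bs" using Bsf K by simp
        moreover have "t' * N = q - N * tt" by (simp add: t'_def q_def algebra_simps)
        ultimately have "0 < K * B'" using qf r0 NK2 by linarith
        then have B'0: "0 < B'" using K by (simp add: zero_less_mult_iff)
        have eq': "As + int k * B' = t' * int n"
          using \<open>K * B' = K * Bs - N * tt\<close> \<open>t' * N = q - N * tt\<close>
          by (simp add: As_def K_def N_def algebra_simps)
        have oB': "odd (As + B')" using oAs bb_even by (simp add: B'_def)
        obtain m where m: "m \<in> Sset" "odd m" "m \<le> \<bar>As\<bar> + B' + 2"
          using less.hyps[OF lt t'1 B'0 As0 eq' oB'] by blast
        moreover have "B' \<le> Bs" using bb_nonneg by (simp add: B'_def)
        ultimately show ?thesis using hle' by (intro bexI[of _ m]) auto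
      next
        case False
        then have ttt: "t \<le> tt" by simp
        have ind_ok: ?thesis if tI: "t \<in> Ind n k"
        proof -
          obtain m where m: "m \<in> Sset" "odd m" "m = \<bar>t * int n - int k * Bs\<bar> + Bs + 2"
            using ind_val[OF tI Bsfc[unfolded q_def N_def K_def] oBs[unfolded q_def N_def K_def]]
            by blast
          have "m = \<bar>As\<bar> + Bs + 2" using m(3) by (simp add: As_def q_def N_def K_def)
          then show ?thesis using hle' m by (intro bexI[of _ m]) auto
        qed
        have bndN: "(K - 1)^2 < (bnd + 1) * N" using bnd_prop by (simp add: K_def N_def)
        show ?thesis
        proof (cases "odd k")
          case False
          show ?thesis
          proof (cases "t \<le> bnd")
            case True
            then show ?thesis using Ind_mem[OF less.prems(1) ttt] False ind_ok by simp
          next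
            case tb: False
            have "(bnd + 1) * N \<le> t * N" using tb NK2 K mult_right_mono[of "bnd + 1" t N] by simp
            then have big: "(K - 1)^2 < q" using bndN by (simp add: q_def)
            have sq: "(K - 1)^2 = K * K - 2 * K + 1" by (simp add: power2_eq_square algebra_simps)
            have geK: "K \<le> \<bar>As\<bar> + Bs"
            proof (cases "Bs = f")
              case True
              then have Ar: "As = r" using qf by (simp add: As_def)
              then have r1: "1 \<le> r" using As0 r0 by simp
              show ?thesis
              proof (rule ccontr)
                assume "\<not> K \<le> \<bar>As\<bar> + Bs"
                then have "f \<le> K - 1 - r" using Ar True r0 by simp
                then have "K * f \<le> K * (K - 1 - r)" using K by simp
                moreover have "K * (K - 1 - r) = K * K - K - K * r" by (simp add: algebra_simps)
                moreover have "0 \<le> (K - 1) * (r - 1)" using K r1 by simp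
                moreover have "(K - 1) * (r - 1) = K * r - K - r + 1" by (simp add: algebra_simps)
                ultimately show False using big sq qf by linarith
              qed
            next
              case False
              then have rn: "r \<noteq> 0" and Bc: "Bs = f + 1" using Bs_c by (auto simp: c_def)
              then have r1: "1 \<le> r" using r0 by simp
              have Ar: "As = r - K" using qf Bc by (simp add: As_def algebra_simps)
              show ?thesis
              proof (rule ccontr)
                assume "\<not> K \<le> \<bar>As\<bar> + Bs"
                then have "f \<le> K - 3" using Ar Bc r0 by simp
                then have "K * f \<le> K * (K - 3)" using K by simp
                moreover have "K * (K - 3) = K * K - 3 * K" by (simp add: algebra_simps)
                ultimately show False using big sq qf r0 by linarith
              qed
            qed
            have "odd (\<bar>As\<bar> + Bs)" using oAs by simp
            moreover have "even K" using False by (simp add: K_def)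
            ultimately have "K + 1 \<le> \<bar>As\<bar> + Bs" using geK
              by (metis add_le_imp_le_right dvd_add_right_iff odd_one le_less zless_imp_add1_zle)
            then show ?thesis using hle' False k3_case[of "\<bar>A\<bar> + B + 2"] by (simp add: K_def)
          qed
        next
          case True
          have nodd: "odd n" using True oddk_oddn by simp
          have "odd t"
          proof -
            have "A + B = q - (K - 1) * B" using eq by (simp add: algebra_simps)
            moreover have "even ((K - 1) * B)" using True by (simp add: K_def)
            ultimately have "odd q" using less.prems(5) by auto
            then show ?thesis by (simp add: q_def)
          qed
          show ?thesis
          proof (cases "t \<le> bnd + 1")
            case True
            then show ?thesis using Ind_mem[OF less.prems(1) ttt] \<open>odd k\<close> \<open>odd t\<close> ind_ok by simp
          next
            case tb: False
            then have t3: "3 \<le> t" using bnd_nonneg \<open>odd t\<close> by presburger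
            define f1 where "f1 = N div K"
            define r1 where "r1 = N mod K"
            define g where "g = ((t - 1) * N) div K"
            have Nf1: "N = K * f1 + r1" by (simp add: f1_def r1_def)
            have r10: "0 \<le> r1" "r1 < K" using K by (auto simp: r1_def)
            have "(bnd + 1) * N \<le> (t - 1) * N" using tb NK2 K mult_right_mono[of "bnd + 1" "t - 1" N] by simp
            then have big: "(K - 1)^2 < (t - 1) * N" using bndN by simp
            have sq: "(K - 1)^2 = K * K - 2 * K + 1" by (simp add: power2_eq_square algebra_simps)
            have "K * f1 + K * g \<le> N + (t - 1) * N"
            proof -
              have "K * f1 \<le> N" using Nf1 r10 by simp
              moreover have "K * g \<le> (t - 1) * N" unfolding g_def using K
                by (metis mult_div_mod_eq le_add_same_cancel1 mod_int_pos_iff)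
              ultimately show ?thesis by simp
            qed
            moreover have "N + (t - 1) * N = q" by (simp add: q_def algebra_simps)
            ultimately have "K * (f1 + g) \<le> q" by (simp add: algebra_simps)
            then have ffg: "f1 + g \<le> f" unfolding f_def by (rule le_div_of_mult[OF K])
            have "K * (K - 2) \<le> (t - 1) * N"
            proof -
              have "K * (K - 2) = K * K - 2 * K" by (simp add: algebra_simps)
              then show ?thesis using big sq by linarith
            qed
            then have gK: "K - 2 \<le> g" unfolding g_def by (rule le_div_of_mult[OF K])
            have "2 * N \<le> (t - 1) * N" using t3 NK2 K mult_right_mono[of 2 "t - 1" N] by simp
            then have "K * 4 \<le> (t - 1) * N" using NK2 by simp
            then have g4: "4 \<le> g" unfolding g_def by (rule le_div_of_mult[OF K])
            have f_big: "2 * f1 + K + 2 \<le> 2 * f" using ffg gK g4 by linarith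
            have cost_ge: "f + 2 \<le> \<bar>A\<bar> + B + 2" using hle' Bsf by simp
            have I1: "1 \<in> Ind n k" using Ind_mem[of 1] tt_pos bnd_nonneg \<open>odd k\<close> by simp
            have oN: "odd N" using nodd by (simp add: N_def)
            have oK: "odd K" using True by (simp add: K_def)
            show ?thesis
            proof (cases "2 * r1 \<le> K + 1")
              case True
              define m where "m = N + (1 - K) * f1 + 2"
              have "m \<in> Sset" using Gval1[OF I1] by (simp add: m_def N_def K_def f1_def)
              moreover have "odd m"
              proof -
                have "even ((1 - K) * f1)" using oK by simp
                then show ?thesis using oN by (simp add: m_def)
              qed
              moreover have "m \<le> f + 2"
              proof -
                have "m = f1 + r1 + 2" using Nf1 by (simp add: m_def algebra_simps)
                then show ?thesis using True f_big by linarith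
              qed
              ultimately show ?thesis using cost_ge by (intro bexI[of _ m]) auto
            next
              case False
              then have r1n: "r1 \<noteq> 0" using K by auto
              have ce: "- ((- N) div K) = f1 + 1" using K r1n by (simp add: ceil_div f1_def r1_def)
              define m where "m = (1 + K) * (f1 + 1) - N + 2"
              have ce': "- ((- (1 * int n)) div int k) = f1 + 1" using ce by (simp add: N_def K_def)
              have "m \<in> Sset" using Gval2[OF I1, unfolded ce'] by (simp add: m_def N_def K_def)
              moreover have "odd m"
              proof -
                have "even ((1 + K) * (f1 + 1))" using oK by simp
                then show ?thesis using oN by (simp add: m_def)
              qed
              moreover have "m \<le> f + 2"
              proof -
                have "m = f1 + K - r1 + 3" using Nf1 by (simp add: m_def algebra_simps)
                then show ?thesis using False f_big by linarith
              qed
              ultimately show ?thesis using cost_ge by (intro bexI[of _ m]) auto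
            qed
          qed
        qed
      qed
    qed
  qed
qed

end


lemma cost_le: "cost A B \<le> \<bar>A\<bar> + \<bar>B\<bar> + 2"
  by (simp add: cost_def)

lemma cost_neg: "cost (- A) (- B) = cost A B"
  by (simp add: cost_def)

context petk
begin

lemma Ind_bounds: "t \<in> Ind n k \<Longrightarrow> 0 \<le> t \<and> t \<le> int (2 * k)"
proof -
  assume t: "t \<in> Ind n k"
  have a: "int (2 * k div gcd n k) \<le> int (2 * k)" by (metis div_le_dividend of_nat_le_iff)
  have "k div gcd n k \<le> 2 * k" using div_le_dividend[of k "gcd n k"] by linarith
  then have b: "int (k div gcd n k) \<le> int (2 * k)" by (metis of_nat_le_iff)
  show ?thesis using t a b unfolding Ind_def Let_def by (auto split: if_splits)
qed

lemma Ind_finite: "finite (Ind n k)"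
  by (rule finite_subset[of _ "{0..int (2 * k)}"]) (auto dest: Ind_bounds)

lemma Sset_finite: "finite Sset"
  unfolding Sset_def G_alt using Ind_finite by auto

lemma lat_lower:
  assumes la0: "lat n k A0 B0"
  shows "\<exists>m\<in>Sset. odd m \<and> m \<le> cost A0 B0"
proof -
  have gen: "\<exists>m\<in>Sset. odd m \<and> m \<le> cost A B" if la: "lat n k A B" and B0: "0 \<le> B" for A B
  proof -
    have dv: "int n dvd A + int k * B" and od: "odd (A + B)" using la by (auto simp: lat_def)
    consider "B = 0" | "A = 0" "B \<noteq> 0" | "A \<noteq> 0" "B \<noteq> 0" by blast
    then show ?thesis
    proof cases
      case 1
      then have "int n' dvd A" using dv n'_dvd_n dvd_trans by auto
      moreover have "odd A" using od 1 by simp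
      ultimately obtain m where "m \<in> Sset" "odd m" "m \<le> \<bar>A\<bar>" using nd_case by blast
      then show ?thesis using 1 by (auto simp: cost_def)
    next
      case 2
      then have "int n' dvd B" using dv nd_dvd by simp
      moreover have "odd B" using od 2 by simp
      ultimately obtain m where "m \<in> Sset" "odd m" "m \<le> \<bar>B\<bar>" using nd_case by blast
      then show ?thesis using 2 by (auto simp: cost_def)
    next
      case 3
      have Bp: "0 < B" using 3 B0 by simp
      obtain t where t: "A + int k * B = int n * t" using dv by (auto elim: dvdE)
      have c: "cost A B = \<bar>A\<bar> + B + 2" using 3 B0 by (simp add: cost_def)
      have KB: "int k \<le> int k * B" using Bp mult_left_mono[of 1 B "int k"] by simp
      show ?thesis
      proof (cases "1 \<le> t")
        case True
        have "A + int k * B = t * int n" using t by (simp add: mult.commute)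
        then show ?thesis using core[OF True Bp 3(1)] od c by simp
      next
        case False
        then have t0: "t \<le> 0" by simp
        have nt: "int n * t \<le> 0" using t0 by (simp add: mult_nonneg_nonpos)
        show ?thesis
        proof (cases "odd k")
          case False
          have "1 \<le> B" using Bp by simp
          then have "int k + 3 \<le> cost A B" using c t nt KB abs_ge_minus_self[of A] by linarith
          then show ?thesis using k3_case False by simp
        next
          case True
          have on: "odd n" using oddk_oddn True by simp
          have "odd t"
          proof -
            have "A + B = int n * t - (int k - 1) * B" using t by (simp add: algebra_simps)
            moreover have "even ((int k - 1) * B)" using True by simp
            ultimately have "odd (int n * t)" using od by auto
            then show ?thesis by simp
          qed
          then have "t \<le> -1" using t0 by presburger
          then have "int n * t \<le> - int n" using mult_left_mono[of t "-1" "int n"] by simp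
          then have "int n \<le> \<bar>A\<bar>" using t KB by linarith
          moreover have "int n' \<le> int n"
          proof -
            have "n' dvd n" using basic(4) by (metis dvd_triv_right)
            then have "n' \<le> n" using basic(2) by (intro dvd_imp_le) auto
            then show ?thesis by simp
          qed
          moreover have "odd (int n')" using oddn_oddn'[OF on] by simp
          ultimately have "int n' \<le> cost A B" "odd (int n')" using c Bp by linarith+
          moreover have "int n' \<in> Sset" by (simp add: Sset_def)
          ultimately show ?thesis by blast
        qed
      qed
    qed
  qed
  show ?thesis
  proof (cases "0 \<le> B0")
    case True then show ?thesis using gen la0 by blast
  next
    case False
    have "lat n k (- A0) (- B0)" using la0 unfolding lat_def
      by (metis add.inverse_distrib_swap dvd_minus_iff even_minus minus_add_distrib mult_minus_right)
    then show ?thesis using gen[of "- A0" "- B0"] False cost_neg by simp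
  qed
qed

lemma lat_upper:
  assumes m: "m \<in> Sset" and om: "odd m"
  shows "\<exists>A B. lat n k A B \<and> cost A B \<le> m"
proof -
  have kn': "int k * int n' = int n * int k'"
  proof -
    have "k * n' = n * k'" using basic(4,5) by (metis mult.assoc mult.commute)
    then show ?thesis by (metis of_nat_mult)
  qed
  consider "m = int n'" | "m = int k + 3" | "m \<in> G_set n k" using m by (auto simp: Sset_def)
  then show ?thesis
  proof cases
    case 1
    have "lat n k 0 (int n')" using kn' om 1 by (simp add: lat_def)
    moreover have "cost 0 (int n') \<le> m" using 1 by (simp add: cost_def)
    ultimately show ?thesis by blast
  next
    case 2
    have "lat n k (- int k) 1" using om 2 by (simp add: lat_def)
    moreover have "cost (- int k) 1 \<le> m" using 2 basic by (simp add: cost_def)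
    ultimately show ?thesis by blast
  next
    case 3
    then obtain t where tI: "t \<in> Ind n k" and
      mv: "m = t * int n + (1 - int k) * ((t * int n) div int k) + 2 \<or>
           m = (1 + int k) * (- ((- (t * int n)) div int k)) - t * int n + 2"
      unfolding G_alt by blast
    have t0: "0 \<le> t" using Ind_bounds[OF tI] by simp
    define K where "K = int k"
    define q where "q = t * int n"
    have K: "0 < K" using basic by (simp add: K_def)
    have q0: "0 \<le> q" using t0 by (simp add: q_def)
    show ?thesis
    using mv proof
      assume mv1: "m = t * int n + (1 - int k) * ((t * int n) div int k) + 2"
      define f where "f = q div K"
      define A where "A = q - K * f"
      have "0 \<le> q mod K" using K by simp
      moreover have "K * (q div K) + q mod K = q" by (rule mult_div_mod_eq)
      ultimately have "K * (q div K) \<le> q" by linarith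
      then have A0: "0 \<le> A" by (simp add: A_def f_def)
      have f0: "0 \<le> f" using K q0 by (simp add: f_def pos_imp_zdiv_nonneg_iff)
      have me: "m = A + f + 2" using mv1 by (simp add: A_def f_def q_def K_def algebra_simps)
      have "lat n k A f"
        unfolding lat_def using me om by (simp add: A_def q_def K_def)
      moreover have "cost A f \<le> m" using cost_le[of A f] A0 f0 me by simp
      ultimately show ?thesis by blast
    next
      assume mv2: "m = (1 + int k) * (- ((- (t * int n)) div int k)) - t * int n + 2"
      define c where "c = - ((- q) div K)"
      define A where "A = q - K * c"
      have "0 \<le> (- q) mod K" using K by simp
      moreover have "K * ((- q) div K) + (- q) mod K = - q" by (rule mult_div_mod_eq)
      ultimately have "K * ((- q) div K) \<le> - q" by linarith
      then have A0: "A \<le> 0" by (simp add: A_def c_def)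
      have c0: "0 \<le> c"
      proof -
        have "0 \<le> K * c" using A0 q0 by (simp add: A_def)
        then show ?thesis using K by (simp add: zero_le_mult_iff)
      qed
      have me: "m = - A + c + 2" using mv2 by (simp add: A_def c_def q_def K_def algebra_simps)
      have "odd (A + c)"
      proof -
        have "A + c = m + 2 * A - 2" using me by simp
        then show ?thesis using om by simp
      qed
      then have "lat n k A c" unfolding lat_def by (simp add: A_def q_def K_def)
      moreover have "cost A c \<le> m" using cost_le[of A c] A0 c0 me by simp
      ultimately show ?thesis by blast
    qed
  qed
qed

end

theorem theorem1:
  fixes n k :: nat
  assumes "2 < 2 * k" and "2 * k \<le> n"
    and "\<not> (even n \<and> odd k)"
  shows "int (pet_odd_girth n k) =
    Min (({int (n div gcd n k), int k + 3} \<union> G_set n k) \<inter> {m. odd m})"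
proof -
  interpret petk n k using assms by unfold_locales
  define T where "T = Sset \<inter> {m. odd m}"
  have Teq: "({int (n div gcd n k), int k + 3} \<union> G_set n k) \<inter> {m. odd m} = T"
    by (simp add: T_def Sset_def n'_def dd_def)
  have Tfin: "finite T" using Sset_finite by (simp add: T_def)
  have Tne: "T \<noteq> {}"
  proof (cases "odd k")
    case True
    then have "odd (int n')" using oddk_oddn oddn_oddn' by simp
    then show ?thesis by (auto simp: T_def Sset_def)
  next
    case False
    then show ?thesis by (auto simp: T_def Sset_def)
  qed
  define M where "M = Min T"
  have MT: "M \<in> T" using Tfin Tne by (simp add: M_def)
  define Q where "Q = (\<lambda>l. odd l \<and> (\<exists>vs. pet_cycle n k vs \<and> length vs = l))"
  have girth: "pet_odd_girth n k = (LEAST l. Q l)" by (simp add: pet_odd_girth_def Q_def)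
  have nk: "2 \<le> n" "0 < k" "k < n" using basic kn by auto
  have MS: "M \<in> Sset" "odd M" using MT by (auto simp: T_def)
  obtain A B where AB: "lat n k A B" "cost A B \<le> M" using lat_upper[OF MS] by blast
  obtain vs where vs: "pet_cycle n k vs" "odd (length vs)" "int (length vs) \<le> cost A B"
    using lat_cycle[OF nk AB(1)] by blast
  have Qv: "Q (length vs)" using vs by (auto simp: Q_def)
  have Qg: "Q (pet_odd_girth n k)" unfolding girth by (rule LeastI[of Q, OF Qv])
  have "pet_odd_girth n k \<le> length vs" unfolding girth by (rule Least_le[of Q, OF Qv])
  then have le1: "int (pet_odd_girth n k) \<le> M" using vs(3) AB(2) by linarith
  obtain ws where ws: "pet_cycle n k ws" "length ws = pet_odd_girth n k" "odd (length ws)"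
    using Qg by (auto simp: Q_def)
  obtain A' B' where AB': "lat n k A' B'" "cost A' B' \<le> int (length ws)"
    using cycle_lat[OF ws(1) ws(3)] by blast
  obtain m where m: "m \<in> Sset" "odd m" "m \<le> cost A' B'" using lat_lower[OF AB'(1)] by blast
  have "M \<le> m" unfolding M_def using Tfin m by (simp add: T_def)
  then have le2: "M \<le> int (pet_odd_girth n k)" using m AB' ws(2) by linarith
  show ?thesis using le1 le2 Teq M_def by simp
qed

end
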